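(* Let $k$ be a difference field of characteristic $0$, $R=k\{y_1,\ldots,y_n\}$, and $I$ a radical well-mixed $\sigma$-ideal of $R$. Suppose $\mathbf{u}_1,\mathbf{u}_2\in\mathbb{N}[x]^n$ satisfy $\mathbf{y}^{\mathbf{u}_1+\mathbf{u}_2}\in I$. Then $I=\langle I,\mathbf{y}^{\mathbf{u}_1}\rangle_r\cap\langle I,\mathbf{y}^{\mathbf{u}_2}\rangle_r$.
   Context: A difference field is a field $k$ with a ring endomorphism $\sigma$; $R=k\{y_1,\ldots,y_n\}$ is the polynomial ring over $k$ in the variables $\sigma^j(y_i)$, with $\sigma$ extended naturally. For $p=\sum_ic_ix^i\in\mathbb{N}[x]$ and $a\in R$, $a^p=\prod_i(\sigma^i(a))^{c_i}$; $\mathbf{y}^{\mathbf{u}}=y_1^{u_1}\cdots y_n^{u_n}$. A $\sigma$-ideal is an ideal stable under $\sigma$; well-mixed if $ab\in I\Rightarrow a\sigma(b)\in I$. $\langle F\rangle_r$ is the smallest radical well-mixed $\sigma$-ideal containing $F$; $\langle I,f\rangle_r$ means $\langle I\cup\{f\}\rangle_r$. *)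

theory Defs
  imports "HOL-Library.Poly_Mapping" "HOL-Computational_Algebra.Polynomial"
begin

definition ring_endo :: "('k::field \<Rightarrow> 'k) \<Rightarrow> bool" where
  "ring_endo s \<longleftrightarrow> (\<forall>a b. s (a + b) = s a + s b) \<and> (\<forall>a b. s (a * b) = s a * s b) \<and> s 1 = 1"

text \<open>Variables sigma^j(y_i) are indexed by (i, j) with i in the finite type 'n.
  Monomials are finitely supported exponent maps; the difference polynomial ring
  R = k{y_1..y_n} is the ring of finitely supported maps from monomials to k.\<close>
type_synonym 'n dmono = "('n \<times> nat) \<Rightarrow>\<^sub>0 nat"
type_synonym ('n, 'k) dpoly = "'n dmono \<Rightarrow>\<^sub>0 'k"

definition shift_mono :: "'n dmono \<Rightarrow> 'n dmono" where
  "shift_mono m = (\<Sum>v\<in>Poly_Mapping.keys m. Poly_Mapping.single (fst v, Suc (snd v)) (Poly_Mapping.lookup m v))"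

text \<open>Natural extension of sigma to R: acts on coefficients and sends sigma^j(y_i) to sigma^(j+1)(y_i).\<close>
definition sigmaR :: "('k::field \<Rightarrow> 'k) \<Rightarrow> ('n, 'k) dpoly \<Rightarrow> ('n, 'k) dpoly" where
  "sigmaR s p = (\<Sum>m\<in>Poly_Mapping.keys p. Poly_Mapping.single (shift_mono m) (s (Poly_Mapping.lookup p m)))"

definition yvar :: "'n \<Rightarrow> ('n, 'k::field) dpoly" where
  "yvar i = Poly_Mapping.single (Poly_Mapping.single (i, 0) 1) 1"

definition dpow :: "('k::field \<Rightarrow> 'k) \<Rightarrow> ('n, 'k) dpoly \<Rightarrow> nat poly \<Rightarrow> ('n, 'k) dpoly" where
  "dpow s a p = (\<Prod>i\<le>degree p. ((sigmaR s ^^ i) a) ^ coeff p i)"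

definition ymon :: "('k::field \<Rightarrow> 'k) \<Rightarrow> ('n::finite \<Rightarrow> nat poly) \<Rightarrow> ('n, 'k) dpoly" where
  "ymon s u = (\<Prod>i\<in>UNIV. dpow s (yvar i) (u i))"

definition is_ideal :: "('a::comm_ring_1) set \<Rightarrow> bool" where
  "is_ideal I \<longleftrightarrow> 0 \<in> I \<and> (\<forall>a\<in>I. \<forall>b\<in>I. a + b \<in> I) \<and> (\<forall>r. \<forall>a\<in>I. r * a \<in> I)"

definition sigma_ideal :: "('k::field \<Rightarrow> 'k) \<Rightarrow> ('n, 'k) dpoly set \<Rightarrow> bool" where
  "sigma_ideal s I \<longleftrightarrow> is_ideal I \<and> (\<forall>a\<in>I. sigmaR s a \<in> I)"

definition well_mixed :: "('k::field \<Rightarrow> 'k) \<Rightarrow> ('n, 'k) dpoly set \<Rightarrow> bool" where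
  "well_mixed s I \<longleftrightarrow> (\<forall>a b. a * b \<in> I \<longrightarrow> a * sigmaR s b \<in> I)"

definition radical :: "('a::comm_ring_1) set \<Rightarrow> bool" where
  "radical I \<longleftrightarrow> (\<forall>a m. a ^ m \<in> I \<longrightarrow> a \<in> I)"

definition rwm_sigma_ideal :: "('k::field \<Rightarrow> 'k) \<Rightarrow> ('n, 'k) dpoly set \<Rightarrow> bool" where
  "rwm_sigma_ideal s I \<longleftrightarrow> sigma_ideal s I \<and> well_mixed s I \<and> radical I"

definition rwm_closure :: "('k::field \<Rightarrow> 'k) \<Rightarrow> ('n, 'k) dpoly set \<Rightarrow> ('n, 'k) dpoly set" where
  "rwm_closure s F = \<Inter>{J. rwm_sigma_ideal s J \<and> F \<subseteq> J}"

end

theory Submission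
  imports Defs
begin

lemma colon_rwm:
  assumes "rwm_sigma_ideal s I"
  shows "rwm_sigma_ideal s {f. f * g \<in> I}"
proof -
  from assms have id: "is_ideal I" and wm: "well_mixed s I" and rad: "radical I"
    and sg: "\<forall>a\<in>I. sigmaR s a \<in> I"
    unfolding rwm_sigma_ideal_def sigma_ideal_def by auto
  have z: "0 \<in> I" and ad: "\<And>a b. a \<in> I \<Longrightarrow> b \<in> I \<Longrightarrow> a + b \<in> I"
    and ml: "\<And>r a. a \<in> I \<Longrightarrow> r * a \<in> I"
    using id unfolding is_ideal_def by auto
  have wm': "\<And>a b. a * b \<in> I \<Longrightarrow> a * sigmaR s b \<in> I" using wm unfolding well_mixed_def by auto
  have "is_ideal {f. f * g \<in> I}"
    unfolding is_ideal_def using z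
    by (auto simp: distrib_right mult.assoc intro: ad ml)
  moreover have "\<forall>a\<in>{f. f * g \<in> I}. sigmaR s a \<in> {f. f * g \<in> I}"
  proof
    fix a assume "a \<in> {f. f * g \<in> I}"
    then have "g * a \<in> I" by (simp add: mult.commute)
    then have "g * sigmaR s a \<in> I" by (rule wm')
    then show "sigmaR s a \<in> {f. f * g \<in> I}" by (simp add: mult.commute)
  qed
  moreover have "well_mixed s {f. f * g \<in> I}"
    unfolding well_mixed_def
  proof (intro allI impI)
    fix a b assume "a * b \<in> {f. f * g \<in> I}"
    then have "(a * g) * b \<in> I" by (simp add: ac_simps)
    then have "(a * g) * sigmaR s b \<in> I" by (rule wm')
    then show "a * sigmaR s b \<in> {f. f * g \<in> I}" by (simp add: ac_simps)
  qed
  moreover have "radical {f. f * g \<in> I}"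
    unfolding radical_def
  proof (intro allI impI)
    fix a m assume h: "a ^ m \<in> {f. f * g \<in> I}"
    show "a \<in> {f. f * g \<in> I}"
    proof (cases m)
      case 0
      then have "g \<in> I" using h by simp
      then have "a * g \<in> I" by (rule ml)
      then show ?thesis by simp
    next
      case (Suc k)
      have "(a * g) ^ m = g ^ k * (a ^ m * g)" using Suc by (simp add: power_mult_distrib ac_simps)
      then have "(a * g) ^ m \<in> I" using h ml by simp
      then have "a * g \<in> I" using rad unfolding radical_def by blast
      then show ?thesis by simp
    qed
  qed
  ultimately show ?thesis unfolding rwm_sigma_ideal_def sigma_ideal_def by blast
qed

lemma closure_sub:
  assumes "rwm_sigma_ideal s J" "F \<subseteq> J"
  shows "rwm_closure s F \<subseteq> J"
  using assms unfolding rwm_closure_def by blast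

theorem lemma5p3:
  fixes s :: "'k::field_char_0 \<Rightarrow> 'k"
    and I :: "('n::finite, 'k) dpoly set"
    and u1 u2 :: "'n \<Rightarrow> nat poly"
  assumes "ring_endo s"
    and "rwm_sigma_ideal s I"
    and "ymon s (\<lambda>i. u1 i + u2 i) \<in> I"
  shows "I = rwm_closure s (insert (ymon s u1) I) \<inter> rwm_closure s (insert (ymon s u2) I)"
proof -
  define a where "a = ymon s u1"
  define b where "b = ymon s u2"
  have dp: "\<And>(x::('n, 'k) dpoly) p q. dpow s x (p + q) = dpow s x p * dpow s x q"
  proof -
    fix x :: "('n, 'k) dpoly" and p q :: "nat poly"
    let ?N = "max (degree p) (degree q)"
    have e: "\<And>r. degree r \<le> ?N \<Longrightarrow> dpow s x r = (\<Prod>i\<le>?N. ((sigmaR s ^^ i) x) ^ coeff r i)"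
    proof -
      fix r :: "nat poly" assume "degree r \<le> ?N"
      then show "dpow s x r = (\<Prod>i\<le>?N. ((sigmaR s ^^ i) x) ^ coeff r i)"
        unfolding dpow_def
        by (intro prod.mono_neutral_left) (auto simp: coeff_eq_0)
    qed
    have "dpow s x (p + q) = (\<Prod>i\<le>?N. ((sigmaR s ^^ i) x) ^ coeff (p + q) i)"
      by (rule e) (simp add: degree_add_le)
    also have "\<dots> = (\<Prod>i\<le>?N. ((sigmaR s ^^ i) x) ^ coeff p i * ((sigmaR s ^^ i) x) ^ coeff q i)"
      by (simp add: power_add)
    also have "\<dots> = dpow s x p * dpow s x q"
      by (simp add: prod.distrib e[of p] e[of q])
    finally show "dpow s x (p + q) = dpow s x p * dpow s x q" .
  qed
  have ab: "a * b \<in> I"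
    using assms(3) unfolding a_def b_def ymon_def by (simp add: dp prod.distrib)
  show ?thesis
  proof
    show "I \<subseteq> rwm_closure s (insert (ymon s u1) I) \<inter> rwm_closure s (insert (ymon s u2) I)"
      unfolding rwm_closure_def by blast
  next
    show "rwm_closure s (insert (ymon s u1) I) \<inter> rwm_closure s (insert (ymon s u2) I) \<subseteq> I"
    proof
      fix f assume f: "f \<in> rwm_closure s (insert (ymon s u1) I) \<inter> rwm_closure s (insert (ymon s u2) I)"
      have id: "is_ideal I" using assms(2) unfolding rwm_sigma_ideal_def sigma_ideal_def by auto
      have ml: "\<And>r x. x \<in> I \<Longrightarrow> x * r \<in> I" using id unfolding is_ideal_def by (metis mult.commute)
      have "rwm_closure s (insert a I) \<subseteq> {h. h * b \<in> I}"
        by (rule closure_sub[OF colon_rwm[OF assms(2)]]) (auto simp: ab ml)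
      then have fb: "f * b \<in> I" using f unfolding a_def by auto
      have "rwm_closure s (insert b I) \<subseteq> {h. h * f \<in> I}"
        by (rule closure_sub[OF colon_rwm[OF assms(2)]]) (auto simp: ml, metis fb mult.commute)
      then have "f * f \<in> I" using f unfolding b_def by auto
      then have "f ^ 2 \<in> I" by (simp add: power2_eq_square)
      then show "f \<in> I" using assms(2) unfolding rwm_sigma_ideal_def radical_def by blast
    qed
  qed
qed

end
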